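(* Let $Id_{Gr}\colon Gr\to Gr$ be the identity functor of the category of groups. There is a natural isomorphism of functors $Gr\to Gr$ $$\Gamma_1\colon G^{ab}\xrightarrow{\simeq}T_1(Id_{Gr})(G)$$ such that $\Gamma_1(\bar g)=t_1(g)$ for $g\in G$.
   Context: Notation. - $G^{ab}=G/[G,G]$, with $\bar g$ the class of $g$. - For a reduced functor $F\colon Gr\to Gr$: $cr_2F(G,G)=\ker(F(G*G)\to F(G)\times F(G))$, induced by the two retractions of the free product $G*G$. - $T_1F(G)$ is the quotient of $F(G)$ by the image of $cr_2F(G,G)\subseteq F(G*G)$ under $F(\nabla)$ (a normal subgroup), where $\nabla\colon G*G\to G$ is the folding map; $t_1$ is the projection. *)

theory Defs
  imports "HOL-Algebra.Algebra"
begin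

text \<open>A letter is a pair (b, x): b = False means x lies in the first copy of G,
  b = True means x lies in the second copy.\<close>

fun fp_push :: "('a, 'm) monoid_scheme \<Rightarrow> bool \<times> 'a \<Rightarrow> (bool \<times> 'a) list \<Rightarrow> (bool \<times> 'a) list" where
  "fp_push G (b, x) [] = (if x = \<one>\<^bsub>G\<^esub> then [] else [(b, x)])"
| "fp_push G (b, x) ((c, y) # ws) =
     (if b = c then (if x \<otimes>\<^bsub>G\<^esub> y = \<one>\<^bsub>G\<^esub> then ws else (b, x \<otimes>\<^bsub>G\<^esub> y) # ws)
      else if x = \<one>\<^bsub>G\<^esub> then (c, y) # ws else (b, x) # (c, y) # ws)"

definition fp_reduced :: "('a, 'm) monoid_scheme \<Rightarrow> (bool \<times> 'a) list \<Rightarrow> bool" where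
  "fp_reduced G ws \<longleftrightarrow>
     (\<forall>(b, x) \<in> set ws. x \<in> carrier G \<and> x \<noteq> \<one>\<^bsub>G\<^esub>) \<and>
     (\<forall>i. Suc i < length ws \<longrightarrow> fst (ws ! i) \<noteq> fst (ws ! Suc i))"

definition free_prod_self :: "('a, 'm) monoid_scheme \<Rightarrow> (bool \<times> 'a) list monoid" where
  "free_prod_self G = \<lparr> carrier = {ws. fp_reduced G ws},
                        monoid.mult = (\<lambda>ws vs. foldr (fp_push G) ws vs),
                        one = [] \<rparr>"

definition fp_eval :: "('a, 'm) monoid_scheme \<Rightarrow> (bool \<Rightarrow> 'a \<Rightarrow> 'a) \<Rightarrow> (bool \<times> 'a) list \<Rightarrow> 'a" where
  "fp_eval G phi ws = foldr (\<lambda>(b, x) acc. phi b x \<otimes>\<^bsub>G\<^esub> acc) ws \<one>\<^bsub>G\<^esub>"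

text \<open>The two retractions r1 = (id, 1), r2 = (1, id) and the folding map nabla = (id, id).\<close>
definition fp_r1 :: "('a, 'm) monoid_scheme \<Rightarrow> (bool \<times> 'a) list \<Rightarrow> 'a" where
  "fp_r1 G = fp_eval G (\<lambda>b x. if b then \<one>\<^bsub>G\<^esub> else x)"

definition fp_r2 :: "('a, 'm) monoid_scheme \<Rightarrow> (bool \<times> 'a) list \<Rightarrow> 'a" where
  "fp_r2 G = fp_eval G (\<lambda>b x. if b then x else \<one>\<^bsub>G\<^esub>)"

definition fp_fold :: "('a, 'm) monoid_scheme \<Rightarrow> (bool \<times> 'a) list \<Rightarrow> 'a" where
  "fp_fold G = fp_eval G (\<lambda>b x. x)"

text \<open>cr_2 Id(G,G) = ker(G * G \<rightarrow> G \<times> G).\<close>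
definition cr2_id :: "('a, 'm) monoid_scheme \<Rightarrow> (bool \<times> 'a) list set" where
  "cr2_id G = {w \<in> carrier (free_prod_self G). fp_r1 G w = \<one>\<^bsub>G\<^esub> \<and> fp_r2 G w = \<one>\<^bsub>G\<^esub>}"

definition T1_kernel :: "('a, 'm) monoid_scheme \<Rightarrow> 'a set" where
  "T1_kernel G = fp_fold G ` cr2_id G"

text \<open>T_1(Id)(G) = G / nabla(cr_2 Id(G,G)); t_1(g) is the coset of g.\<close>
definition T1_id :: "('a, 'm) monoid_scheme \<Rightarrow> 'a set monoid" where
  "T1_id G = G Mod T1_kernel G"

text \<open>Abelianization G^ab = G/[G,G]; the class of g is the coset of g.\<close>
definition abelianization :: "('a, 'm) monoid_scheme \<Rightarrow> 'a set monoid" where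
  "abelianization G = G Mod derived G (carrier G)"

definition quot_map :: "('b, 'n) monoid_scheme \<Rightarrow> 'b set \<Rightarrow> ('a \<Rightarrow> 'b) \<Rightarrow> 'a set \<Rightarrow> 'b set" where
  "quot_map H N f C = N <#>\<^bsub>H\<^esub> (f ` C)"

end

theory Submission
  imports Defs
begin

lemma fp_reduced_Nil[simp]: "fp_reduced G []"
  by (simp add: fp_reduced_def)

lemma fp_reduced_Cons:
  "fp_reduced G ((b, x) # ws) \<longleftrightarrow>
     x \<in> carrier G \<and> x \<noteq> \<one>\<^bsub>G\<^esub> \<and> fp_reduced G ws \<and>
     (case ws of [] \<Rightarrow> True | (c, y) # _ \<Rightarrow> b \<noteq> c)"
proof -
  have "(\<forall>i. Suc i < length ((b, x) # ws) \<longrightarrow> fst (((b, x) # ws) ! i) \<noteq> fst (((b, x) # ws) ! Suc i))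
    \<longleftrightarrow> (\<forall>i. Suc i < length ws \<longrightarrow> fst (ws ! i) \<noteq> fst (ws ! Suc i)) \<and>
         (case ws of [] \<Rightarrow> True | (c, y) # _ \<Rightarrow> b \<noteq> c)" (is "?L \<longleftrightarrow> ?R")
  proof
    assume L: ?L
    have "case ws of [] \<Rightarrow> True | (c, y) # _ \<Rightarrow> b \<noteq> c"
      using L[rule_format, of 0] by (cases ws) auto
    moreover have "\<forall>i. Suc i < length ws \<longrightarrow> fst (ws ! i) \<noteq> fst (ws ! Suc i)"
      using L by (metis Suc_less_eq length_Cons nth_Cons_Suc)
    ultimately show ?R by blast
  next
    assume R: ?R
    show ?L
    proof (intro allI impI)
      fix i assume i: "Suc i < length ((b, x) # ws)"
      show "fst (((b, x) # ws) ! i) \<noteq> fst (((b, x) # ws) ! Suc i)"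
      proof (cases i)
        case 0 then show ?thesis using R i by (cases ws) auto
      next
        case (Suc j) then show ?thesis using R i by auto
      qed
    qed
  qed
  then show ?thesis unfolding fp_reduced_def by auto
qed

lemma fp_eval_Cons[simp]: "fp_eval G phi ((b, x) # ws) = phi b x \<otimes>\<^bsub>G\<^esub> fp_eval G phi ws"
  by (simp add: fp_eval_def)

lemma fp_eval_Nil[simp]: "fp_eval G phi [] = \<one>\<^bsub>G\<^esub>"
  by (simp add: fp_eval_def)

definition letters_in :: "('a, 'm) monoid_scheme \<Rightarrow> (bool \<times> 'a) list \<Rightarrow> bool" where
  "letters_in G ws \<longleftrightarrow> (\<forall>(b, x) \<in> set ws. x \<in> carrier G)"

lemma letters_in_Cons[simp]: "letters_in G ((b,x) # ws) \<longleftrightarrow> x \<in> carrier G \<and> letters_in G ws"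
  by (auto simp: letters_in_def)

lemma letters_in_Nil[simp]: "letters_in G []"
  by (auto simp: letters_in_def)

lemma reduced_letters: "fp_reduced G ws \<Longrightarrow> letters_in G ws"
  by (auto simp: fp_reduced_def letters_in_def)

definition homlike :: "('a, 'm) monoid_scheme \<Rightarrow> (bool \<Rightarrow> 'a \<Rightarrow> 'a) \<Rightarrow> bool" where
  "homlike G phi \<longleftrightarrow> (\<forall>b. \<forall>x \<in> carrier G. phi b x \<in> carrier G) \<and>
     (\<forall>b. \<forall>x \<in> carrier G. \<forall>y \<in> carrier G. phi b (x \<otimes>\<^bsub>G\<^esub> y) = phi b x \<otimes>\<^bsub>G\<^esub> phi b y)"

context group
begin

lemma homlike_one: "homlike G phi \<Longrightarrow> phi b \<one> = \<one>"
  unfolding homlike_def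
  by (metis one_closed r_cancel_one' one_closed l_one)

lemma eval_carrier: "homlike G phi \<Longrightarrow> letters_in G ws \<Longrightarrow> fp_eval G phi ws \<in> carrier G"
  by (induction ws) (auto simp: homlike_def)

lemma push_eval:
  assumes h: "homlike G phi" and x: "x \<in> carrier G" and ws: "letters_in G ws"
  shows "fp_eval G phi (fp_push G (b, x) ws) = phi b x \<otimes> fp_eval G phi ws"
proof (cases ws)
  case Nil then show ?thesis using h x homlike_one[OF h] by (auto simp: homlike_def)
next
  case (Cons a ws')
  obtain c y where a: "a = (c, y)" by force
  have y: "y \<in> carrier G" and ws': "letters_in G ws'" using ws Cons a by auto
  have e: "fp_eval G phi ws' \<in> carrier G" using eval_carrier[OF h ws'] .
  have px: "phi b x \<in> carrier G" "phi c y \<in> carrier G" using h x y by (auto simp: homlike_def)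
  show ?thesis
  proof (cases "b = c")
    case True
    have m: "phi b (x \<otimes> y) = phi b x \<otimes> phi b y" using h x y by (auto simp: homlike_def)
    show ?thesis
    proof (cases "x \<otimes> y = \<one>")
      case True2: True
      have "phi b x \<otimes> phi b y = \<one>" using m True2 homlike_one[OF h] by simp
      then show ?thesis using Cons a True True2 px e by (simp add: m_assoc[symmetric])
    next
      case False
      then show ?thesis using Cons a True m px e by (simp add: m_assoc)
    qed
  next
    case False
    then show ?thesis using Cons a px e homlike_one[OF h] by auto
  qed
qed

lemma push_reduced:
  assumes x: "x \<in> carrier G" and ws: "fp_reduced G ws"
  shows "fp_reduced G (fp_push G (b, x) ws)"
proof (cases ws)
  case Nil then show ?thesis using x by (auto simp: fp_reduced_Cons)
next
  case (Cons a ws')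
  obtain c y where a: "a = (c, y)" by force
  have R: "y \<in> carrier G" "y \<noteq> \<one>" "fp_reduced G ws'"
      "case ws' of [] \<Rightarrow> True | (d, z) # _ \<Rightarrow> c \<noteq> d"
    using ws Cons a by (auto simp: fp_reduced_Cons)
  show ?thesis
  proof (cases "b = c")
    case True
    then show ?thesis using R x Cons a by (auto simp: fp_reduced_Cons)
  next
    case False
    then show ?thesis using ws R x Cons a by (auto simp: fp_reduced_Cons)
  qed
qed

lemma foldr_push:
  assumes l: "letters_in G l" and v: "fp_reduced G v"
  shows "fp_reduced G (foldr (fp_push G) l v) \<and>
     (\<forall>phi. homlike G phi \<longrightarrow> fp_eval G phi (foldr (fp_push G) l v) = fp_eval G phi l \<otimes> fp_eval G phi v)"
  using l
proof (induction l)
  case Nil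
  then show ?case using v eval_carrier[OF _ reduced_letters[OF v]] by auto
next
  case (Cons a l)
  obtain b x where a: "a = (b, x)" by force
  have x: "x \<in> carrier G" and l: "letters_in G l" using Cons.prems a by auto
  note IH = Cons.IH[OF l]
  have red: "fp_reduced G (foldr (fp_push G) (a # l) v)"
    using push_reduced[OF x, of "foldr (fp_push G) l v" b] IH a by simp
  moreover have "\<forall>phi. homlike G phi \<longrightarrow> fp_eval G phi (foldr (fp_push G) (a # l) v) = fp_eval G phi (a # l) \<otimes> fp_eval G phi v"
  proof (intro allI impI)
    fix phi assume h: "homlike G phi"
    have "fp_eval G phi (foldr (fp_push G) (a # l) v) = phi b x \<otimes> fp_eval G phi (foldr (fp_push G) l v)"
      using push_eval[OF h x reduced_letters[OF conjunct1[OF IH]]] a by simp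
    also have "\<dots> = phi b x \<otimes> (fp_eval G phi l \<otimes> fp_eval G phi v)" using IH h by simp
    also have "\<dots> = fp_eval G phi (a # l) \<otimes> fp_eval G phi v"
      using a h x eval_carrier[OF h l] eval_carrier[OF h reduced_letters[OF v]]
      by (simp add: m_assoc homlike_def)
    finally show "fp_eval G phi (foldr (fp_push G) (a # l) v) = fp_eval G phi (a # l) \<otimes> fp_eval G phi v" .
  qed
  ultimately show ?case by blast
qed

lemma homlike_id: "homlike G (\<lambda>b x. x)" by (simp add: homlike_def)
lemma homlike_r1: "homlike G (\<lambda>b x. if b then \<one> else x)" by (simp add: homlike_def)
lemma homlike_r2: "homlike G (\<lambda>b x. if b then x else \<one>)" by (simp add: homlike_def)

lemma word_in_cr2:
  assumes l: "letters_in G l"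
    and r1: "fp_r1 G l = \<one>" and r2: "fp_r2 G l = \<one>"
  shows "fp_fold G l \<in> T1_kernel G"
proof -
  let ?w = "foldr (fp_push G) l []"
  have F: "fp_reduced G ?w \<and> (\<forall>phi. homlike G phi \<longrightarrow> fp_eval G phi ?w = fp_eval G phi l \<otimes> \<one>)"
    using foldr_push[OF l, of "[]"] by simp
  have c: "\<And>phi. homlike G phi \<Longrightarrow> fp_eval G phi ?w = fp_eval G phi l"
    using F eval_carrier[OF _ l] by auto
  have "?w \<in> cr2_id G"
    using F c[OF homlike_r1] c[OF homlike_r2] r1 r2
    by (simp add: cr2_id_def free_prod_self_def fp_r1_def fp_r2_def)
  moreover have "fp_fold G ?w = fp_fold G l" using c[OF homlike_id] by (simp add: fp_fold_def)
  ultimately show ?thesis unfolding T1_kernel_def by (metis image_eqI)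
qed

lemma derived_sub_T1: "derived G (carrier G) \<subseteq> T1_kernel G"
proof
  fix z assume "z \<in> derived G (carrier G)"
  then show "z \<in> T1_kernel G" unfolding derived_def
  proof (induction rule: generate.induct)
    case one
    then show ?case using word_in_cr2[of "[]"] by (simp add: fp_r1_def fp_r2_def fp_fold_def)
  next
    case (incl h)
    then obtain a c where ac: "a \<in> carrier G" "c \<in> carrier G" "h = a \<otimes> c \<otimes> inv a \<otimes> inv c" by blast
    have "fp_fold G [(False,a),(True,c),(False,inv a),(True,inv c)] \<in> T1_kernel G"
      using ac by (intro word_in_cr2) (simp_all add: fp_r1_def fp_r2_def)
    then show ?case using ac by (simp add: fp_fold_def m_assoc)
  next
    case (inv h)
    then obtain a c where ac: "a \<in> carrier G" "c \<in> carrier G" "h = a \<otimes> c \<otimes> inv a \<otimes> inv c" by blast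
    have "fp_fold G [(False,c),(True,a),(False,inv c),(True,inv a)] \<in> T1_kernel G"
      using ac by (intro word_in_cr2) (simp_all add: fp_r1_def fp_r2_def)
    moreover have "inv h = c \<otimes> a \<otimes> inv c \<otimes> inv a"
      using ac by (simp add: inv_mult_group m_assoc)
    ultimately show ?case using ac by (simp add: fp_fold_def m_assoc)
  next
    case (eng h1 h2)
    from eng.IH(1) obtain w where w: "w \<in> cr2_id G" "h1 = fp_fold G w" unfolding T1_kernel_def by blast
    from eng.IH(2) obtain v where v: "v \<in> cr2_id G" "h2 = fp_fold G v" unfolding T1_kernel_def by blast
    have wr: "fp_reduced G w" and vr: "fp_reduced G v"
      using w v by (auto simp: cr2_id_def free_prod_self_def)
    note F = foldr_push[OF reduced_letters[OF wr] vr]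
    have "foldr (fp_push G) w v \<in> cr2_id G"
      using F w v homlike_r1 homlike_r2
      by (auto simp: cr2_id_def free_prod_self_def fp_r1_def fp_r2_def)
    moreover have "fp_fold G (foldr (fp_push G) w v) = h1 \<otimes> h2"
      using F homlike_id w v by (simp add: fp_fold_def)
    ultimately show ?case unfolding T1_kernel_def by (metis image_eqI)
  qed
qed

lemma T1_sub_derived: "T1_kernel G \<subseteq> derived G (carrier G)"
proof
  let ?D = "derived G (carrier G)"
  interpret N: normal ?D G by (rule derived_self_is_normal)
  interpret Q: comm_group "G Mod ?D" by (rule derived_quot_is_comm_group)
  have key: "letters_in G w \<Longrightarrow> ?D #> fp_fold G w = (?D #> fp_r1 G w) <#> (?D #> fp_r2 G w)" for w
  proof (induction w)
    case Nil
    show ?case using N.rcos_sum[of \<one> \<one>] by (simp add: fp_r1_def fp_r2_def fp_fold_def)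
  next
    case (Cons a w)
    obtain b x where a: "a = (b, x)" by force
    have x: "x \<in> carrier G" and l: "letters_in G w" using Cons.prems a by auto
    have f: "fp_fold G w \<in> carrier G" "fp_r1 G w \<in> carrier G" "fp_r2 G w \<in> carrier G"
      using eval_carrier[OF homlike_id l] eval_carrier[OF homlike_r1 l] eval_carrier[OF homlike_r2 l]
      by (auto simp: fp_fold_def fp_r1_def fp_r2_def)
    have IH: "?D #> fp_fold G w = (?D #> fp_r1 G w) <#> (?D #> fp_r2 G w)" using Cons.IH[OF l] .
    have ff: "fp_fold G (a # w) = x \<otimes> fp_fold G w" using a by (simp add: fp_fold_def)
    have inQ: "\<And>g. g \<in> carrier G \<Longrightarrow> ?D #> g \<in> carrier (G Mod ?D)"
      by (simp add: FactGroup_def RCOSETS_def) blast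
    have mQ: "\<And>p q. set_mult G p q = monoid.mult (G Mod ?D) p q" by (simp add: FactGroup_def)
    have "?D #> fp_fold G (a # w) = (?D #> x) <#> ((?D #> fp_r1 G w) <#> (?D #> fp_r2 G w))"
      using ff IH N.rcos_sum[OF x f(1)] by simp
    also have "\<dots> = (?D #> fp_r1 G (a # w)) <#> (?D #> fp_r2 G (a # w))"
    proof (cases b)
      case True
      have "(?D #> x) <#> ((?D #> fp_r1 G w) <#> (?D #> fp_r2 G w))
          = (?D #> fp_r1 G w) <#> ((?D #> x) <#> (?D #> fp_r2 G w))"
        unfolding mQ using inQ x f Q.m_lcomm by blast
      then show ?thesis using True a x f N.rcos_sum[OF x f(3)]
        by (simp add: fp_r1_def fp_r2_def)
    next
      case False
      have "(?D #> x) <#> ((?D #> fp_r1 G w) <#> (?D #> fp_r2 G w))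
          = ((?D #> x) <#> (?D #> fp_r1 G w)) <#> (?D #> fp_r2 G w)"
        unfolding mQ using inQ x f Q.m_assoc by metis
      then show ?thesis using False a x f N.rcos_sum[OF x f(2)]
        by (simp add: fp_r1_def fp_r2_def)
    qed
    finally show ?case .
  qed
  fix z assume "z \<in> T1_kernel G"
  then obtain w where w: "w \<in> cr2_id G" "z = fp_fold G w" unfolding T1_kernel_def by blast
  have wr: "fp_reduced G w" and r: "fp_r1 G w = \<one>" "fp_r2 G w = \<one>"
    using w by (auto simp: cr2_id_def free_prod_self_def)
  have zc: "z \<in> carrier G" using w eval_carrier[OF homlike_id reduced_letters[OF wr]]
    by (simp add: fp_fold_def)
  have "?D #> z = ?D"
    using key[OF reduced_letters[OF wr]] w r N.rcos_sum[of \<one> \<one>] coset_mult_one[OF N.subset]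
    by simp
  then show "z \<in> ?D" using coset_join1 zc N.subgroup_axioms by blast
qed

lemma T1_eq: "T1_kernel G = derived G (carrier G)"
  using T1_sub_derived derived_sub_T1 by blast

end

theorem proposition2p2:
  fixes G :: "('a, 'm) monoid_scheme" and H :: "('b, 'n) monoid_scheme"
  assumes "group G" and "group H"
  shows "\<exists>\<Gamma>G \<Gamma>H.
     T1_kernel G \<lhd> G \<and> T1_kernel H \<lhd> H \<and>
     \<Gamma>G \<in> iso (abelianization G) (T1_id G) \<and>
     (\<forall>g \<in> carrier G. \<Gamma>G (derived G (carrier G) #>\<^bsub>G\<^esub> g) = T1_kernel G #>\<^bsub>G\<^esub> g) \<and>
     \<Gamma>H \<in> iso (abelianization H) (T1_id H) \<and>
     (\<forall>h \<in> carrier H. \<Gamma>H (derived H (carrier H) #>\<^bsub>H\<^esub> h) = T1_kernel H #>\<^bsub>H\<^esub> h) \<and>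
     (\<forall>f \<in> hom G H. \<forall>C \<in> carrier (abelianization G).
        \<Gamma>H (quot_map H (derived H (carrier H)) f C) = quot_map H (T1_kernel H) f (\<Gamma>G C))"
proof -
  have eG: "T1_kernel G = derived G (carrier G)" using group.T1_eq[OF assms(1)] .
  have eH: "T1_kernel H = derived H (carrier H)" using group.T1_eq[OF assms(2)] .
  show ?thesis
    apply (rule exI[of _ "\<lambda>C. C"], rule exI[of _ "\<lambda>C. C"])
    using eG eH group.derived_self_is_normal[OF assms(1)] group.derived_self_is_normal[OF assms(2)]
    by (simp add: T1_id_def abelianization_def iso_set_refl)
qed

end
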